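(* Let $D\ge 1$, $n_1,\dots,n_D\ge 1$, let $\mathcal{X}\in\mathbb{R}^{n_1\times\cdots\times n_D}$, let $\gamma\ge 0$, and for each $d\in\{1,\dots,D\}$ let $W_d=\{w_{d,ij}\}_{1\le i<j\le n_d}$ be a collection of nonnegative weights. Define, for $\mathcal{U}\in\mathbb{R}^{n_1\times\cdots\times n_D}$, $$F_\gamma(\mathcal{U})=\frac12\|\mathcal{X}-\mathcal{U}\|_F^2+\gamma\sum_{d=1}^D\sum_{1\le i<j\le n_d} w_{d,ij}\,\|\mathcal{U}\times_d\Delta_{d,ij}\|_F .$$ Then $F_\gamma$ has a unique minimizer $\widehat{\mathcal{U}}$, and the map $(\mathcal{X},\gamma,W_1,\dots,W_D)\mapsto\widehat{\mathcal{U}}$ is jointly continuous (on the set where $\gamma\ge0$ and all weights are nonnegative).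
   Context: $\|\cdot\|_F$ is the square root of the sum of squares of all entries of a tensor. For a tensor $\mathcal{A}\in\mathbb{R}^{n_1\times\cdots\times n_D}$ and a matrix $B\in\mathbb{R}^{m\times n_d}$, the $d$-mode product $\mathcal{A}\times_d B$ is the tensor of size $n_1\times\cdots\times n_{d-1}\times m\times n_{d+1}\times\cdots\times n_D$ with entries $(\mathcal{A}\times_d B)_{i_1\ldots i_{d-1} j i_{d+1}\ldots i_D}=\sum_{i_d=1}^{n_d}a_{i_1\ldots i_D}b_{j i_d}$. Here $\Delta_{d,ij}=e_i^\top-e_j^\top\in\mathbb{R}^{1\times n_d}$, where $e_i$ is the $i$th standard basis vector of $\mathbb{R}^{n_d}$; thus $\mathcal{U}\times_d\Delta_{d,ij}$ is the difference of the $i$th and $j$th mode-$d$ subarrays of $\mathcal{U}$ (the subarrays obtained by fixing the $d$th index to $i$, respectively $j$). *)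

theory Defs
  imports Complex_Main
begin

text \<open>Tensors of order D with mode sizes n 0, ..., n (D-1) (0-based modes and indices)
  are functions from multi-indices (nat => nat) to real, vanishing outside the index set.\<close>

definition idx_set :: "nat \<Rightarrow> (nat \<Rightarrow> nat) \<Rightarrow> (nat \<Rightarrow> nat) set" where
  "idx_set D n = {\<iota>. (\<forall>d<D. \<iota> d < n d) \<and> (\<forall>d. D \<le> d \<longrightarrow> \<iota> d = 0)}"

definition tensors :: "nat \<Rightarrow> (nat \<Rightarrow> nat) \<Rightarrow> ((nat \<Rightarrow> nat) \<Rightarrow> real) set" where
  "tensors D n = {U. \<forall>\<iota>. \<iota> \<notin> idx_set D n \<longrightarrow> U \<iota> = 0}"

definition frob :: "nat \<Rightarrow> (nat \<Rightarrow> nat) \<Rightarrow> ((nat \<Rightarrow> nat) \<Rightarrow> real) \<Rightarrow> real" where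
  "frob D n U = sqrt (\<Sum>\<iota>\<in>idx_set D n. (U \<iota>)\<^sup>2)"

definition mode_prod :: "nat \<Rightarrow> nat \<Rightarrow> ((nat \<Rightarrow> nat) \<Rightarrow> real) \<Rightarrow> (nat \<Rightarrow> nat \<Rightarrow> real)
    \<Rightarrow> ((nat \<Rightarrow> nat) \<Rightarrow> real)" where
  "mode_prod d nd A B = (\<lambda>\<iota>. \<Sum>k<nd. A (\<iota>(d := k)) * B (\<iota> d) k)"

text \<open>The 1 x n_d row matrix Delta_{ij} = e_i^T - e_j^T (only row 0 is used).\<close>
definition Delta :: "nat \<Rightarrow> nat \<Rightarrow> nat \<Rightarrow> nat \<Rightarrow> real" where
  "Delta i j = (\<lambda>r k. if r = 0 then (if k = i then 1 else 0) - (if k = j then 1 else 0) else 0)"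

definition objective :: "nat \<Rightarrow> (nat \<Rightarrow> nat) \<Rightarrow> ((nat \<Rightarrow> nat) \<Rightarrow> real) \<Rightarrow> real
    \<Rightarrow> (nat \<Rightarrow> nat \<Rightarrow> nat \<Rightarrow> real) \<Rightarrow> ((nat \<Rightarrow> nat) \<Rightarrow> real) \<Rightarrow> real" where
  "objective D n X \<gamma> w U =
     1/2 * (frob D n (\<lambda>\<iota>. X \<iota> - U \<iota>))\<^sup>2
     + \<gamma> * (\<Sum>d<D. \<Sum>i<n d. \<Sum>j\<in>{i<..<n d}.
              w d i j * frob D (n(d := 1)) (mode_prod d (n d) U (Delta i j)))"

definition admissible :: "nat \<Rightarrow> (nat \<Rightarrow> nat) \<Rightarrow> ((nat \<Rightarrow> nat) \<Rightarrow> real) \<Rightarrow> real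
    \<Rightarrow> (nat \<Rightarrow> nat \<Rightarrow> nat \<Rightarrow> real) \<Rightarrow> bool" where
  "admissible D n X \<gamma> w \<longleftrightarrow> X \<in> tensors D n \<and> 0 \<le> \<gamma> \<and>
     (\<forall>d<D. \<forall>i j. i < j \<and> j < n d \<longrightarrow> 0 \<le> w d i j)"

definition is_minimizer :: "nat \<Rightarrow> (nat \<Rightarrow> nat) \<Rightarrow> ((nat \<Rightarrow> nat) \<Rightarrow> real) \<Rightarrow> real
    \<Rightarrow> (nat \<Rightarrow> nat \<Rightarrow> nat \<Rightarrow> real) \<Rightarrow> ((nat \<Rightarrow> nat) \<Rightarrow> real) \<Rightarrow> bool" where
  "is_minimizer D n X \<gamma> w U \<longleftrightarrow> U \<in> tensors D n \<and>
     (\<forall>V\<in>tensors D n. objective D n X \<gamma> w U \<le> objective D n X \<gamma> w V)"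

definition minimizer :: "nat \<Rightarrow> (nat \<Rightarrow> nat) \<Rightarrow> ((nat \<Rightarrow> nat) \<Rightarrow> real) \<Rightarrow> real
    \<Rightarrow> (nat \<Rightarrow> nat \<Rightarrow> nat \<Rightarrow> real) \<Rightarrow> ((nat \<Rightarrow> nat) \<Rightarrow> real)" where
  "minimizer D n X \<gamma> w = (THE U. is_minimizer D n X \<gamma> w U)"

definition param_dist :: "nat \<Rightarrow> (nat \<Rightarrow> nat)
    \<Rightarrow> ((nat \<Rightarrow> nat) \<Rightarrow> real) \<Rightarrow> real \<Rightarrow> (nat \<Rightarrow> nat \<Rightarrow> nat \<Rightarrow> real)
    \<Rightarrow> ((nat \<Rightarrow> nat) \<Rightarrow> real) \<Rightarrow> real \<Rightarrow> (nat \<Rightarrow> nat \<Rightarrow> nat \<Rightarrow> real) \<Rightarrow> real" where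
  "param_dist D n X \<gamma> w X' \<gamma>' w' = sqrt (
      (\<Sum>\<iota>\<in>idx_set D n. (X \<iota> - X' \<iota>)\<^sup>2) + (\<gamma> - \<gamma>')\<^sup>2
      + (\<Sum>d<D. \<Sum>i<n d. \<Sum>j\<in>{i<..<n d}. (w d i j - w' d i j)\<^sup>2))"

end

theory Submission imports Defs "HOL-Analysis.Analysis" begin

lemma compact_box:
  fixes S :: "'a \<Rightarrow> real set"
  assumes "\<And>i. compact (S i)"
  shows "compact (Pi\<^sub>E UNIV S)"
proof -
  have "compactin (product_topology (\<lambda>i. euclidean) UNIV) (Pi\<^sub>E UNIV S)"
    using assms by (simp add: compactin_PiE)
  then show ?thesis by (simp add: euclidean_product_topology)
qed

lemma idx_finite: "finite (idx_set D n)"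
proof -
  have "idx_set D n \<subseteq> (\<lambda>f d. if d < D then f d else 0) ` (Pi\<^sub>E {..<D} (\<lambda>d. {..<n d}))"
  proof
    fix \<iota> assume a: "\<iota> \<in> idx_set D n"
    let ?f = "restrict \<iota> {..<D}"
    have "?f \<in> Pi\<^sub>E {..<D} (\<lambda>d. {..<n d})" using a by (auto simp: idx_set_def)
    moreover have "\<iota> = (\<lambda>d. if d < D then ?f d else 0)" using a by (auto simp: idx_set_def)
    ultimately show "\<iota> \<in> (\<lambda>f d. if d < D then f d else 0) ` (Pi\<^sub>E {..<D} (\<lambda>d. {..<n d}))" by blast
  qed
  moreover have "finite (Pi\<^sub>E {..<D} (\<lambda>d. {..<n d}))" by (rule finite_PiE) auto
  ultimately show ?thesis using finite_subset by blast
qed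

lemma coord_cont: "continuous_on S (\<lambda>U::('a\<Rightarrow>real). U i)"
  by (rule continuous_on_subset[OF continuous_on_product_coordinates]) simp

lemma cont_obj: "continuous_on S (objective D n X \<gamma> w)"
  unfolding objective_def frob_def mode_prod_def
  by (intro continuous_intros coord_cont)

definition Q :: "nat \<Rightarrow> (nat \<Rightarrow> nat) \<Rightarrow> ((nat \<Rightarrow> nat) \<Rightarrow> real) \<Rightarrow> real" where
  "Q D n U = (\<Sum>\<iota>\<in>idx_set D n. (U \<iota>)^2)"

lemma Q_nonneg: "0 \<le> Q D n U" unfolding Q_def by (simp add: sum_nonneg)
lemma frob_Q: "frob D n U = sqrt (Q D n U)" unfolding frob_def Q_def ..
lemma frob_sq: "(frob D n U)^2 = Q D n U" by (simp add: frob_Q Q_nonneg)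
lemma frob_L2: "frob D n U = L2_set U (idx_set D n)" unfolding frob_def L2_set_def ..
lemma frob_nonneg: "0 \<le> frob D n U" by (simp add: frob_L2)

definition gg where "gg D n d i j U = frob D (n(d:=1)) (mode_prod d (n d) U (Delta i j))"
definition pen where "pen D n \<gamma> w U = \<gamma> * (\<Sum>d<D. \<Sum>i<n d. \<Sum>j\<in>{i<..<n d}. w d i j * gg D n d i j U)"

lemma obj_eq: "objective D n X \<gamma> w U = 1/2 * Q D n (\<lambda>\<iota>. X \<iota> - U \<iota>) + pen D n \<gamma> w U"
  unfolding objective_def pen_def gg_def by (simp add: frob_sq)

lemma mode_prod_comb: "mode_prod d m (\<lambda>\<iota>. a * U \<iota> + b * V \<iota>) B = (\<lambda>\<iota>. a * mode_prod d m U B \<iota> + b * mode_prod d m V B \<iota>)"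
  unfolding mode_prod_def by (rule ext) (simp add: sum.distrib sum_distrib_left algebra_simps)

lemma mode_prod_diff: "mode_prod d m (\<lambda>\<iota>. U \<iota> - V \<iota>) B = (\<lambda>\<iota>. mode_prod d m U B \<iota> - mode_prod d m V B \<iota>)"
  unfolding mode_prod_def by (rule ext) (simp add: sum_subtractf left_diff_distrib)

lemma gg_convex: assumes "0 \<le> t" "t \<le> 1"
  shows "gg D n d i j (\<lambda>\<iota>. U \<iota> + t * (V \<iota> - U \<iota>)) \<le> (1 - t) * gg D n d i j U + t * gg D n d i j V"
proof -
  let ?M = "\<lambda>U. mode_prod d (n d) U (Delta i j)"
  let ?I = "idx_set D (n(d:=1))"
  have e: "(\<lambda>\<iota>. U \<iota> + t * (V \<iota> - U \<iota>)) = (\<lambda>\<iota>. (1-t) * U \<iota> + t * V \<iota>)" by (auto simp: algebra_simps)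
  have "gg D n d i j (\<lambda>\<iota>. U \<iota> + t * (V \<iota> - U \<iota>)) = L2_set (\<lambda>\<iota>. (1-t) * ?M U \<iota> + t * ?M V \<iota>) ?I"
    unfolding gg_def frob_L2 e mode_prod_comb ..
  also have "\<dots> \<le> L2_set (\<lambda>\<iota>. (1-t) * ?M U \<iota>) ?I + L2_set (\<lambda>\<iota>. t * ?M V \<iota>) ?I" by (rule L2_set_triangle_ineq)
  also have "\<dots> = (1 - t) * gg D n d i j U + t * gg D n d i j V"
    unfolding gg_def frob_L2 using assms by (simp add: L2_set_right_distrib)
  finally show ?thesis .
qed

lemma pen_convex: assumes "0 \<le> \<gamma>" "\<forall>d<D. \<forall>i j. i < j \<and> j < n d \<longrightarrow> 0 \<le> w d i j" "0 \<le> t" "t \<le> 1"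
 shows "pen D n \<gamma> w (\<lambda>\<iota>. U \<iota> + t * (V \<iota> - U \<iota>)) \<le> (1 - t) * pen D n \<gamma> w U + t * pen D n \<gamma> w V"
proof -
  define A where "A = (\<Sum>d<D. \<Sum>i<n d. \<Sum>j\<in>{i<..<n d}. w d i j * gg D n d i j (\<lambda>\<iota>. U \<iota> + t * (V \<iota> - U \<iota>)))"
  define B where "B = (\<Sum>d<D. \<Sum>i<n d. \<Sum>j\<in>{i<..<n d}. w d i j * gg D n d i j U)"
  define C where "C = (\<Sum>d<D. \<Sum>i<n d. \<Sum>j\<in>{i<..<n d}. w d i j * gg D n d i j V)"
  have "A \<le> (\<Sum>d<D. \<Sum>i<n d. \<Sum>j\<in>{i<..<n d}. w d i j * ((1 - t) * gg D n d i j U + t * gg D n d i j V))"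
    unfolding A_def
    apply (intro sum_mono mult_left_mono gg_convex) using assms by auto
  also have "\<dots> = (1-t) * B + t * C"
    unfolding B_def C_def by (simp add: sum_distrib_left sum.distrib distrib_left mult.left_commute)
  finally have "\<gamma> * A \<le> \<gamma> * ((1-t) * B + t * C)" using assms(1) by (rule mult_left_mono)
  then show ?thesis unfolding pen_def A_def[symmetric] B_def[symmetric] C_def[symmetric]
    by (simp add: algebra_simps)
qed

lemma pen_nonneg: assumes "0 \<le> \<gamma>" "\<forall>d<D. \<forall>i j. i < j \<and> j < n d \<longrightarrow> 0 \<le> w d i j"
  shows "0 \<le> pen D n \<gamma> w U"
  unfolding pen_def using assms
  by (intro mult_nonneg_nonneg sum_nonneg) (auto simp: gg_def frob_nonneg)

lemma pen_zero: "pen D n \<gamma> w (\<lambda>_. 0) = 0"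
  unfolding pen_def gg_def mode_prod_def frob_def by simp

lemma L2_diff: "\<bar>L2_set f A - L2_set g A\<bar> \<le> L2_set (\<lambda>x. f x - g x) A"
proof -
  have 1: "L2_set f A \<le> L2_set g A + L2_set (\<lambda>x. f x - g x) A"
    using L2_set_triangle_ineq[of g "\<lambda>x. f x - g x" A] by simp
  have 2: "L2_set g A \<le> L2_set f A + L2_set (\<lambda>x. g x - f x) A"
    using L2_set_triangle_ineq[of f "\<lambda>x. g x - f x" A] by simp
  have 3: "L2_set (\<lambda>x. g x - f x) A = L2_set (\<lambda>x. f x - g x) A"
    unfolding L2_set_def by (simp add: power2_commute)
  show ?thesis using 1 2 3 by linarith
qed

lemma gg_diff: "\<bar>gg D n d i j U - gg D n d i j V\<bar> \<le> gg D n d i j (\<lambda>\<iota>. U \<iota> - V \<iota>)"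
  unfolding gg_def frob_L2 mode_prod_diff by (rule L2_diff)

lemma coord_le: assumes "U \<in> tensors D n" shows "\<bar>U \<kappa>\<bar> \<le> frob D n U"
proof (cases "\<kappa> \<in> idx_set D n")
  case True
  have "frob D n U = L2_set (\<lambda>\<iota>. \<bar>U \<iota>\<bar>) (idx_set D n)" unfolding frob_L2 L2_set_def by simp
  then show ?thesis using member_le_L2_set[OF idx_finite True, of "\<lambda>\<iota>. \<bar>U \<iota>\<bar>"] by simp
next
  case False
  then show ?thesis using assms frob_nonneg[of D n U] by (simp add: tensors_def)
qed

lemma Delta_abs: "\<bar>Delta i j r k\<bar> \<le> 1" by (auto simp: Delta_def)

definition Cg where "Cg D n d = real (card (idx_set D (n(d:=1)))) * real (n d)"

lemma Cg_nonneg: "0 \<le> Cg D n d" by (simp add: Cg_def)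

lemma mode_bound: assumes "U \<in> tensors D n"
  shows "\<bar>mode_prod d m U (Delta i j) \<iota>\<bar> \<le> real m * frob D n U"
proof -
  have "\<bar>mode_prod d m U (Delta i j) \<iota>\<bar> \<le> (\<Sum>k<m. \<bar>U (\<iota>(d := k)) * Delta i j (\<iota> d) k\<bar>)"
    unfolding mode_prod_def by (rule sum_abs)
  also have "\<dots> \<le> (\<Sum>k<m. frob D n U)"
  proof (rule sum_mono)
    fix k
    have "\<bar>U (\<iota>(d := k)) * Delta i j (\<iota> d) k\<bar> = \<bar>U (\<iota>(d := k))\<bar> * \<bar>Delta i j (\<iota> d) k\<bar>" by (rule abs_mult)
    also have "\<dots> \<le> \<bar>U (\<iota>(d := k))\<bar> * 1" by (intro mult_left_mono Delta_abs) simp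
    also have "\<dots> \<le> frob D n U" using coord_le[OF assms] by simp
    finally show "\<bar>U (\<iota>(d := k)) * Delta i j (\<iota> d) k\<bar> \<le> frob D n U" .
  qed
  finally show ?thesis by simp
qed

lemma gg_bound: assumes "U \<in> tensors D n" shows "gg D n d i j U \<le> Cg D n d * frob D n U"
proof -
  let ?I = "idx_set D (n(d:=1))"
  have "gg D n d i j U \<le> (\<Sum>\<iota>\<in>?I. \<bar>mode_prod d (n d) U (Delta i j) \<iota>\<bar>)"
    unfolding gg_def frob_L2 by (rule L2_set_le_sum_abs)
  also have "\<dots> \<le> (\<Sum>\<iota>\<in>?I. real (n d) * frob D n U)"
    by (intro sum_mono mode_bound assms)
  also have "\<dots> = Cg D n d * frob D n U" by (simp add: Cg_def)
  finally show ?thesis .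
qed

lemma tensors_comb: "U \<in> tensors D n \<Longrightarrow> V \<in> tensors D n \<Longrightarrow> (\<lambda>\<iota>. U \<iota> + t * (V \<iota> - U \<iota>)) \<in> tensors D n"
  unfolding tensors_def by auto
lemma tensors_diff: "U \<in> tensors D n \<Longrightarrow> V \<in> tensors D n \<Longrightarrow> (\<lambda>\<iota>. U \<iota> - V \<iota>) \<in> tensors D n"
  unfolding tensors_def by auto
lemma tensors_zero: "(\<lambda>_. 0) \<in> tensors D n"
  unfolding tensors_def by auto

lemma Q_expand: "Q D n (\<lambda>\<iota>. X \<iota> - (U \<iota> + t * (V \<iota> - U \<iota>)))
   = Q D n (\<lambda>\<iota>. X \<iota> - U \<iota>) - 2 * t * (\<Sum>\<iota>\<in>idx_set D n. (X \<iota> - U \<iota>) * (V \<iota> - U \<iota>)) + t^2 * Q D n (\<lambda>\<iota>. V \<iota> - U \<iota>)"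
proof -
  let ?I = "idx_set D n"
  have "(\<Sum>\<iota>\<in>?I. (X \<iota> - (U \<iota> + t * (V \<iota> - U \<iota>)))^2) = (\<Sum>\<iota>\<in>?I. (X \<iota> - U \<iota>)^2 - 2 * t * ((X \<iota> - U \<iota>) * (V \<iota> - U \<iota>)) + t^2 * (V \<iota> - U \<iota>)^2)"
    by (rule sum.cong) (simp_all add: power2_eq_square algebra_simps)
  also have "\<dots> = (\<Sum>\<iota>\<in>?I. (X \<iota> - U \<iota>)^2) - 2 * t * (\<Sum>\<iota>\<in>?I. (X \<iota> - U \<iota>) * (V \<iota> - U \<iota>)) + t^2 * (\<Sum>\<iota>\<in>?I. (V \<iota> - U \<iota>)^2)"
    by (simp add: sum.distrib sum_subtractf sum_distrib_left)
  finally show ?thesis unfolding Q_def .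
qed

lemma variational:
  assumes adm: "admissible D n X \<gamma> w" and min: "is_minimizer D n X \<gamma> w U" and V: "V \<in> tensors D n"
  shows "objective D n X \<gamma> w U + 1/2 * Q D n (\<lambda>\<iota>. V \<iota> - U \<iota>) \<le> objective D n X \<gamma> w V"
proof -
  define S where "S = (\<Sum>\<iota>\<in>idx_set D n. (X \<iota> - U \<iota>) * (V \<iota> - U \<iota>))"
  define q where "q = Q D n (\<lambda>\<iota>. V \<iota> - U \<iota>)"
  define a where "a = - S + pen D n \<gamma> w V - pen D n \<gamma> w U"
  have U: "U \<in> tensors D n" using min by (simp add: is_minimizer_def)
  have key: "0 \<le> t * a + t^2/2 * q" if t: "0 < t" "t \<le> 1" for t
  proof -
    let ?W = "\<lambda>\<iota>. U \<iota> + t * (V \<iota> - U \<iota>)"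
    have "?W \<in> tensors D n" using U V by (rule tensors_comb)
    then have "objective D n X \<gamma> w U \<le> objective D n X \<gamma> w ?W" using min by (simp add: is_minimizer_def)
    also have "\<dots> = 1/2 * (Q D n (\<lambda>\<iota>. X \<iota> - U \<iota>) - 2*t*S + t^2 * q) + pen D n \<gamma> w ?W"
      unfolding obj_eq Q_expand S_def q_def ..
    also have "\<dots> \<le> 1/2 * (Q D n (\<lambda>\<iota>. X \<iota> - U \<iota>) - 2*t*S + t^2 * q) + ((1-t) * pen D n \<gamma> w U + t * pen D n \<gamma> w V)"
      using pen_convex[of \<gamma> D n w t U V] adm t by (auto simp: admissible_def)
    finally show ?thesis unfolding obj_eq a_def by (simp add: algebra_simps)
  qed
  have q0: "0 \<le> q" unfolding q_def by (rule Q_nonneg)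
  have a: "0 \<le> a"
  proof (rule ccontr)
    assume na: "\<not> 0 \<le> a"
    define t where "t = min 1 (- a / (q + 1))"
    have "a / (q + 1) < 0" using na q0 by (simp add: divide_neg_pos)
    then have t0: "0 < t" "t \<le> 1" by (auto simp: t_def)
    have qp: "0 < q + 1" using q0 by simp
    have "t \<le> (- a) / (q + 1)" unfolding t_def by (rule min.cobounded2)
    then have "t * (q + 1) \<le> - a" using pos_le_divide_eq[OF qp] by blast
    then have tq: "t * q \<le> - a" using t0 by (simp add: algebra_simps)
    have "t^2/2 * q = t * (t * q) / 2" by (simp add: power2_eq_square)
    also have "\<dots> \<le> t * (- a) / 2" using mult_left_mono[OF tq, of t] t0 by simp
    finally have "0 \<le> t * a / 2" using key[OF t0] by linarith
    moreover have "t * a < 0" using t0 na by (simp add: mult_pos_neg)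
    ultimately show False by linarith
  qed
  have "Q D n (\<lambda>\<iota>. X \<iota> - V \<iota>) = Q D n (\<lambda>\<iota>. X \<iota> - U \<iota>) - 2*S + q"
    using Q_expand[of D n X U 1 V] unfolding S_def q_def by simp
  then show ?thesis using a unfolding obj_eq a_def q_def by (simp add: algebra_simps)
qed

lemma Q_zero_eq: assumes "U \<in> tensors D n" "V \<in> tensors D n" "Q D n (\<lambda>\<iota>. V \<iota> - U \<iota>) \<le> 0"
  shows "U = V"
proof
  fix \<iota>
  have "Q D n (\<lambda>\<iota>. V \<iota> - U \<iota>) = 0" using assms(3) Q_nonneg[of D n] by (meson antisym)
  then have "\<forall>\<kappa>\<in>idx_set D n. (V \<kappa> - U \<kappa>)^2 = 0"
    unfolding Q_def using sum_nonneg_eq_0_iff[OF idx_finite] by (simp add: sum_nonneg_eq_0_iff[OF idx_finite])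
  then show "U \<iota> = V \<iota>" using assms(1,2) by (cases "\<iota> \<in> idx_set D n") (auto simp: tensors_def)
qed

lemma uniq: assumes adm: "admissible D n X \<gamma> w" and m1: "is_minimizer D n X \<gamma> w U" and m2: "is_minimizer D n X \<gamma> w V"
  shows "U = V"
proof -
  have U: "U \<in> tensors D n" and V: "V \<in> tensors D n" using m1 m2 by (auto simp: is_minimizer_def)
  have 1: "objective D n X \<gamma> w U + 1/2 * Q D n (\<lambda>\<iota>. V \<iota> - U \<iota>) \<le> objective D n X \<gamma> w V"
    by (rule variational[OF adm m1 V])
  have 2: "objective D n X \<gamma> w V \<le> objective D n X \<gamma> w U" using m2 U by (simp add: is_minimizer_def)
  show ?thesis using 1 2 by (intro Q_zero_eq[OF U V]) linarith
qed

lemma exist: assumes adm: "admissible D n X \<gamma> w" shows "\<exists>U. is_minimizer D n X \<gamma> w U"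
proof -
  define r where "r = frob D n X"
  define S where "S = (\<lambda>\<iota>. if \<iota> \<in> idx_set D n then {X \<iota> - r .. X \<iota> + r} else {0::real})"
  define K where "K = Pi\<^sub>E UNIV S"
  have cK: "compact K" unfolding K_def by (rule compact_box) (simp add: S_def)
  have X: "X \<in> tensors D n" using adm by (simp add: admissible_def)
  have XK: "X \<in> K" using X coord_le[OF X] frob_nonneg[of D n X] by (auto simp: K_def S_def r_def tensors_def abs_le_iff)
  have KT: "K \<subseteq> tensors D n"
  proof
    fix x assume "x \<in> K"
    then have "\<forall>i. x i \<in> S i" by (simp add: K_def PiE_iff)
    then show "x \<in> tensors D n" unfolding tensors_def
    proof (intro CollectI allI impI)
      fix \<iota> assume "\<forall>i. x i \<in> S i" "\<iota> \<notin> idx_set D n"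
      then have "x \<iota> \<in> S \<iota>" by blast
      then show "x \<iota> = 0" using \<open>\<iota> \<notin> idx_set D n\<close> by (simp add: S_def)
    qed
  qed
  obtain U where UK: "U \<in> K" and Umin: "\<And>V. V \<in> K \<Longrightarrow> objective D n X \<gamma> w U \<le> objective D n X \<gamma> w V"
    using continuous_attains_inf[OF cK _ cont_obj] XK by blast
  have "0 \<in> S \<kappa>" for \<kappa>
  proof -
    have "\<bar>X \<kappa>\<bar> \<le> r" using coord_le[OF X] by (simp add: r_def)
    then show ?thesis by (auto simp: S_def)
  qed
  then have 0: "(\<lambda>_. 0) \<in> K" by (simp add: K_def PiE_iff)
  have obj0: "objective D n X \<gamma> w (\<lambda>_. 0) = 1/2 * r^2"
    unfolding obj_eq pen_zero r_def frob_sq by simp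
  have "objective D n X \<gamma> w U \<le> objective D n X \<gamma> w V" if V: "V \<in> tensors D n" for V
  proof (cases "V \<in> K")
    case True then show ?thesis by (rule Umin)
  next
    case False
    then obtain \<kappa> where k: "\<kappa> \<in> idx_set D n" "V \<kappa> \<notin> {X \<kappa> - r .. X \<kappa> + r}"
    proof -
      obtain \<kappa> where "V \<kappa> \<notin> S \<kappa>" using False by (auto simp: K_def PiE_iff)
      moreover have "\<kappa> \<in> idx_set D n"
      proof (rule ccontr)
        assume "\<kappa> \<notin> idx_set D n"
        then show False using V calculation by (simp add: S_def tensors_def)
      qed
      ultimately show ?thesis using that by (auto simp: S_def)
    qed
    then have "r < \<bar>X \<kappa> - V \<kappa>\<bar>" by auto
    then have "r^2 < (X \<kappa> - V \<kappa>)^2" using frob_nonneg[of D n X] unfolding r_def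
      by (metis abs_of_nonneg power2_abs power_strict_mono zero_less_numeral)
    also have "\<dots> \<le> Q D n (\<lambda>\<iota>. X \<iota> - V \<iota>)" unfolding Q_def
      by (rule member_le_sum[OF k(1)]) (simp_all add: idx_finite)
    finally have "1/2 * r^2 \<le> objective D n X \<gamma> w V"
      unfolding obj_eq using pen_nonneg[of \<gamma> D n w V] adm by (auto simp: admissible_def)
    then show ?thesis using Umin[OF 0] obj0 by linarith
  qed
  then show ?thesis using UK KT unfolding is_minimizer_def by blast
qed

lemma Q_swap: "Q D n (\<lambda>\<iota>. U \<iota> - V \<iota>) = Q D n (\<lambda>\<iota>. V \<iota> - U \<iota>)"
  unfolding Q_def by (simp add: power2_commute)

lemma pen_diff: "pen D n \<gamma> w V - pen D n \<gamma>0 w0 V = (\<Sum>d<D. \<Sum>i<n d. \<Sum>j\<in>{i<..<n d}. (\<gamma> * w d i j - \<gamma>0 * w0 d i j) * gg D n d i j V)"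
  unfolding pen_def by (simp add: sum_distrib_left sum_subtractf left_diff_distrib mult.assoc)

lemma Q_diff: "1/2 * (Q D n (\<lambda>\<iota>. X \<iota> - U0 \<iota>) - Q D n (\<lambda>\<iota>. X0 \<iota> - U0 \<iota>) - Q D n (\<lambda>\<iota>. X \<iota> - U \<iota>) + Q D n (\<lambda>\<iota>. X0 \<iota> - U \<iota>))
   = (\<Sum>\<iota>\<in>idx_set D n. (X \<iota> - X0 \<iota>) * (U \<iota> - U0 \<iota>))"
proof -
  let ?I = "idx_set D n"
  have "Q D n (\<lambda>\<iota>. X \<iota> - U0 \<iota>) - Q D n (\<lambda>\<iota>. X0 \<iota> - U0 \<iota>) - Q D n (\<lambda>\<iota>. X \<iota> - U \<iota>) + Q D n (\<lambda>\<iota>. X0 \<iota> - U \<iota>)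
     = (\<Sum>\<iota>\<in>?I. (X \<iota> - U0 \<iota>)^2 - (X0 \<iota> - U0 \<iota>)^2 - (X \<iota> - U \<iota>)^2 + (X0 \<iota> - U \<iota>)^2)"
    by (simp add: Q_def sum_subtractf sum.distrib)
  also have "\<dots> = (\<Sum>\<iota>\<in>?I. 2 * ((X \<iota> - X0 \<iota>) * (U \<iota> - U0 \<iota>)))"
    by (rule sum.cong) (simp_all add: power2_eq_square algebra_simps)
  also have "\<dots> = 2 * (\<Sum>\<iota>\<in>?I. (X \<iota> - X0 \<iota>) * (U \<iota> - U0 \<iota>))" by (simp add: sum_distrib_left)
  finally show ?thesis by simp
qed

lemma cs: "(\<Sum>\<iota>\<in>idx_set D n. A \<iota> * B \<iota>) \<le> frob D n A * frob D n B"
proof -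
  have "(\<Sum>\<iota>\<in>idx_set D n. A \<iota> * B \<iota>) \<le> (\<Sum>\<iota>\<in>idx_set D n. \<bar>A \<iota>\<bar> * \<bar>B \<iota>\<bar>)"
    by (rule sum_mono) (simp add: abs_mult[symmetric])
  also have "\<dots> \<le> frob D n A * frob D n B" unfolding frob_L2 by (rule L2_set_mult_ineq)
  finally show ?thesis .
qed

lemma lip:
  assumes adm: "admissible D n X \<gamma> w" and adm0: "admissible D n X0 \<gamma>0 w0"
    and m: "is_minimizer D n X \<gamma> w U" and m0: "is_minimizer D n X0 \<gamma>0 w0 U0"
  shows "frob D n (\<lambda>\<iota>. U \<iota> - U0 \<iota>) \<le> frob D n (\<lambda>\<iota>. X \<iota> - X0 \<iota>)
      + (\<Sum>d<D. \<Sum>i<n d. \<Sum>j\<in>{i<..<n d}. \<bar>\<gamma> * w d i j - \<gamma>0 * w0 d i j\<bar> * Cg D n d)"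
proof -
  define N where "N = frob D n (\<lambda>\<iota>. U \<iota> - U0 \<iota>)"
  define C where "C = (\<Sum>d<D. \<Sum>i<n d. \<Sum>j\<in>{i<..<n d}. \<bar>\<gamma> * w d i j - \<gamma>0 * w0 d i j\<bar> * Cg D n d)"
  have U: "U \<in> tensors D n" and U0: "U0 \<in> tensors D n" using m m0 by (auto simp: is_minimizer_def)
  have 1: "objective D n X \<gamma> w U + 1/2 * Q D n (\<lambda>\<iota>. U0 \<iota> - U \<iota>) \<le> objective D n X \<gamma> w U0"
    by (rule variational[OF adm m U0])
  have 2: "objective D n X0 \<gamma>0 w0 U0 + 1/2 * Q D n (\<lambda>\<iota>. U \<iota> - U0 \<iota>) \<le> objective D n X0 \<gamma>0 w0 U"
    by (rule variational[OF adm0 m0 U])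
  have NQ: "N^2 = Q D n (\<lambda>\<iota>. U \<iota> - U0 \<iota>)" unfolding N_def by (rule frob_sq)
  have "N^2 \<le> (objective D n X \<gamma> w U0 - objective D n X0 \<gamma>0 w0 U0) - (objective D n X \<gamma> w U - objective D n X0 \<gamma>0 w0 U)"
    using 1 2 Q_swap[of D n U0 U] NQ by linarith
  also have "\<dots> = 1/2 * (Q D n (\<lambda>\<iota>. X \<iota> - U0 \<iota>) - Q D n (\<lambda>\<iota>. X0 \<iota> - U0 \<iota>) - Q D n (\<lambda>\<iota>. X \<iota> - U \<iota>) + Q D n (\<lambda>\<iota>. X0 \<iota> - U \<iota>))
      + ((pen D n \<gamma> w U0 - pen D n \<gamma>0 w0 U0) - (pen D n \<gamma> w U - pen D n \<gamma>0 w0 U))"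
    unfolding obj_eq by (simp add: algebra_simps)
  also have "\<dots> = (\<Sum>\<iota>\<in>idx_set D n. (X \<iota> - X0 \<iota>) * (U \<iota> - U0 \<iota>))
      + (\<Sum>d<D. \<Sum>i<n d. \<Sum>j\<in>{i<..<n d}. (\<gamma> * w d i j - \<gamma>0 * w0 d i j) * (gg D n d i j U0 - gg D n d i j U))"
    unfolding Q_diff pen_diff by (simp add: sum_subtractf right_diff_distrib)
  also have "\<dots> \<le> frob D n (\<lambda>\<iota>. X \<iota> - X0 \<iota>) * N + (\<Sum>d<D. \<Sum>i<n d. \<Sum>j\<in>{i<..<n d}. \<bar>\<gamma> * w d i j - \<gamma>0 * w0 d i j\<bar> * Cg D n d * N)"
  proof (rule add_mono)
    show "(\<Sum>\<iota>\<in>idx_set D n. (X \<iota> - X0 \<iota>) * (U \<iota> - U0 \<iota>)) \<le> frob D n (\<lambda>\<iota>. X \<iota> - X0 \<iota>) * N"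
      unfolding N_def by (rule cs)
  next
    have "(\<gamma> * w d i j - \<gamma>0 * w0 d i j) * (gg D n d i j U0 - gg D n d i j U) \<le> \<bar>\<gamma> * w d i j - \<gamma>0 * w0 d i j\<bar> * Cg D n d * N" for d i j
    proof -
      let ?c = "\<gamma> * w d i j - \<gamma>0 * w0 d i j"
      have "?c * (gg D n d i j U0 - gg D n d i j U) \<le> \<bar>?c\<bar> * \<bar>gg D n d i j U0 - gg D n d i j U\<bar>"
        by (metis abs_ge_self abs_mult)
      also have "\<dots> \<le> \<bar>?c\<bar> * (Cg D n d * N)"
      proof (rule mult_left_mono)
        have "\<bar>gg D n d i j U0 - gg D n d i j U\<bar> \<le> gg D n d i j (\<lambda>\<iota>. U0 \<iota> - U \<iota>)" by (rule gg_diff)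
        also have "\<dots> \<le> Cg D n d * frob D n (\<lambda>\<iota>. U0 \<iota> - U \<iota>)" by (rule gg_bound[OF tensors_diff[OF U0 U]])
        also have "frob D n (\<lambda>\<iota>. U0 \<iota> - U \<iota>) = N" unfolding N_def frob_Q using Q_swap[of D n U0 U] by simp
        finally show "\<bar>gg D n d i j U0 - gg D n d i j U\<bar> \<le> Cg D n d * N" .
      qed simp
      finally show ?thesis by (simp add: mult.assoc)
    qed
    then show "(\<Sum>d<D. \<Sum>i<n d. \<Sum>j\<in>{i<..<n d}. (\<gamma> * w d i j - \<gamma>0 * w0 d i j) * (gg D n d i j U0 - gg D n d i j U))
       \<le> (\<Sum>d<D. \<Sum>i<n d. \<Sum>j\<in>{i<..<n d}. \<bar>\<gamma> * w d i j - \<gamma>0 * w0 d i j\<bar> * Cg D n d * N)"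
      by (intro sum_mono)
  qed
  also have "\<dots> = N * (frob D n (\<lambda>\<iota>. X \<iota> - X0 \<iota>) + C)"
    unfolding C_def by (simp add: sum_distrib_left sum_distrib_right algebra_simps)
  finally have le: "N^2 \<le> N * (frob D n (\<lambda>\<iota>. X \<iota> - X0 \<iota>) + C)" .
  have C0: "0 \<le> C" unfolding C_def by (intro sum_nonneg mult_nonneg_nonneg Cg_nonneg) simp
  have "N \<le> frob D n (\<lambda>\<iota>. X \<iota> - X0 \<iota>) + C"
  proof (cases "N = 0")
    case True then show ?thesis using C0 frob_nonneg[of D n "\<lambda>\<iota>. X \<iota> - X0 \<iota>"] by simp
  next
    case False
    then have "0 < N" using frob_nonneg[of D n] unfolding N_def by (metis order_le_less)
    then show ?thesis using le by (simp add: power2_eq_square)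
  qed
  then show ?thesis unfolding N_def C_def .
qed

lemma c_bound:
  fixes g g0 v v0 p :: real
  assumes "\<bar>g - g0\<bar> \<le> p" "\<bar>v - v0\<bar> \<le> p" "p \<le> 1"
  shows "\<bar>g * v - g0 * v0\<bar> \<le> p * (\<bar>v0\<bar> + 1 + \<bar>g0\<bar>)"
proof -
  have e: "g * v - g0 * v0 = (g - g0) * (v - v0) + (g - g0) * v0 + g0 * (v - v0)" by (simp add: algebra_simps)
  have p0: "0 \<le> p" using assms(1) by linarith
  have a: "\<bar>(g - g0) * (v - v0)\<bar> \<le> p * 1" unfolding abs_mult
    using assms p0 by (intro mult_mono) auto
  have b: "\<bar>(g - g0) * v0\<bar> \<le> p * \<bar>v0\<bar>" unfolding abs_mult using assms by (intro mult_right_mono) auto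
  have c: "\<bar>g0 * (v - v0)\<bar> \<le> \<bar>g0\<bar> * p" unfolding abs_mult using assms by (intro mult_left_mono) auto
  have "\<bar>g * v - g0 * v0\<bar> \<le> \<bar>(g - g0) * (v - v0)\<bar> + \<bar>(g - g0) * v0\<bar> + \<bar>g0 * (v - v0)\<bar>"
    unfolding e by (meson abs_triangle_ineq add_mono order_trans order_refl)
  also have "\<dots> \<le> p * 1 + p * \<bar>v0\<bar> + \<bar>g0\<bar> * p" using a b c by linarith
  also have "\<dots> = p * (\<bar>v0\<bar> + 1 + \<bar>g0\<bar>)" by (simp add: algebra_simps)
  finally show ?thesis .
qed

lemma sq_le_pd:
  fixes a b c :: real
  assumes "0 \<le> a" "0 \<le> b" "0 \<le> c" "x^2 \<le> a"
  shows "\<bar>x\<bar> \<le> sqrt (a + b + c)"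
proof -
  have "\<bar>x\<bar> = sqrt (x^2)" by simp
  also have "\<dots> \<le> sqrt (a + b + c)" using assms by (intro real_sqrt_le_mono) linarith
  finally show ?thesis .
qed

theorem proposition4p1:
  fixes D :: nat and n :: "nat \<Rightarrow> nat"
  assumes "1 \<le> D" and "\<forall>d<D. 1 \<le> n d"
  shows "(\<forall>X \<gamma> w. admissible D n X \<gamma> w \<longrightarrow> (\<exists>!U. is_minimizer D n X \<gamma> w U))
    \<and> (\<forall>X0 \<gamma>0 w0. admissible D n X0 \<gamma>0 w0 \<longrightarrow>
        (\<forall>\<epsilon>>0. \<exists>\<delta>>0. \<forall>X \<gamma> w. admissible D n X \<gamma> w \<and> param_dist D n X \<gamma> w X0 \<gamma>0 w0 < \<delta> \<longrightarrow>
           frob D n (\<lambda>\<iota>. minimizer D n X \<gamma> w \<iota> - minimizer D n X0 \<gamma>0 w0 \<iota>) < \<epsilon>))"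
proof -
  have EU: "\<exists>!U. is_minimizer D n X \<gamma> w U" if "admissible D n X \<gamma> w" for X \<gamma> w
    using exist[OF that] uniq[OF that] by blast
  have MM: "is_minimizer D n X \<gamma> w (minimizer D n X \<gamma> w)" if "admissible D n X \<gamma> w" for X \<gamma> w
    unfolding minimizer_def using EU[OF that] by (rule theI')
  have part2: "\<exists>\<delta>>0. \<forall>X \<gamma> w. admissible D n X \<gamma> w \<and> param_dist D n X \<gamma> w X0 \<gamma>0 w0 < \<delta> \<longrightarrow>
           frob D n (\<lambda>\<iota>. minimizer D n X \<gamma> w \<iota> - minimizer D n X0 \<gamma>0 w0 \<iota>) < \<epsilon>"
    if adm0: "admissible D n X0 \<gamma>0 w0" and e: "\<epsilon> > 0" for X0 \<gamma>0 w0 \<epsilon>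
  proof -
    define K where "K = (\<Sum>d<D. \<Sum>i<n d. \<Sum>j\<in>{i<..<n d}. Cg D n d * (\<bar>w0 d i j\<bar> + 1 + \<bar>\<gamma>0\<bar>))"
    have K0: "0 \<le> K" unfolding K_def by (intro sum_nonneg mult_nonneg_nonneg Cg_nonneg) auto
    define \<delta> where "\<delta> = min 1 (\<epsilon> / (2 * (K + 1)))"
    have d0: "0 < \<delta>" using e K0 by (simp add: \<delta>_def)
    show ?thesis
    proof (intro exI[of _ \<delta>] conjI allI impI d0)
      fix X \<gamma> w assume h: "admissible D n X \<gamma> w \<and> param_dist D n X \<gamma> w X0 \<gamma>0 w0 < \<delta>"
      then have adm: "admissible D n X \<gamma> w" by simp
      define p where "p = param_dist D n X \<gamma> w X0 \<gamma>0 w0"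
      define A where "A = (\<Sum>\<iota>\<in>idx_set D n. (X \<iota> - X0 \<iota>)\<^sup>2)"
      define G where "G = (\<gamma> - \<gamma>0)\<^sup>2"
      define W where "W = (\<Sum>d<D. \<Sum>i<n d. \<Sum>j\<in>{i<..<n d}. (w d i j - w0 d i j)\<^sup>2)"
      have pdef: "p = sqrt (A + G + W)" unfolding p_def A_def G_def W_def param_dist_def ..
      have A0: "0 \<le> A" unfolding A_def by (simp add: sum_nonneg)
      have G0: "0 \<le> G" unfolding G_def by simp
      have W0: "0 \<le> W" unfolding W_def by (simp add: sum_nonneg)
      have pd: "p < \<delta>" using h p_def by simp
      have p1: "p \<le> 1" using pd by (simp add: \<delta>_def)
      have p0: "0 \<le> p" unfolding pdef using A0 G0 W0 by simp
      have pK: "p * (K + 1) < \<epsilon>"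
      proof -
        have "p * (K + 1) < \<delta> * (K + 1)" using pd K0 by simp
        also have "\<dots> \<le> \<epsilon> / (2 * (K + 1)) * (K + 1)" using K0 by (intro mult_right_mono) (auto simp: \<delta>_def)
        also have "\<dots> = \<epsilon> / 2" using K0 by (simp add: field_simps)
        finally show ?thesis using e by linarith
      qed
      have fX: "frob D n (\<lambda>\<iota>. X \<iota> - X0 \<iota>) \<le> p"
        unfolding frob_def pdef A_def[symmetric] using G0 W0 by (intro real_sqrt_le_mono) linarith
      have gp: "\<bar>\<gamma> - \<gamma>0\<bar> \<le> p" unfolding pdef using sq_le_pd[OF G0 A0 W0, of "\<gamma> - \<gamma>0"]
        by (simp add: G_def add.commute add.left_commute)
      have wp: "\<bar>w d i j - w0 d i j\<bar> \<le> p" if "d < D" "i < n d" "j \<in> {i<..<n d}" for d i j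
      proof -
        have "(w d i j - w0 d i j)\<^sup>2 \<le> (\<Sum>j\<in>{i<..<n d}. (w d i j - w0 d i j)\<^sup>2)"
          by (rule member_le_sum[OF that(3)]) auto
        also have "\<dots> \<le> (\<Sum>i<n d. \<Sum>j\<in>{i<..<n d}. (w d i j - w0 d i j)\<^sup>2)"
          by (rule member_le_sum[where f="\<lambda>i. \<Sum>j\<in>{i<..<n d}. (w d i j - w0 d i j)\<^sup>2"]) (auto intro!: sum_nonneg that)
        also have "\<dots> \<le> W" unfolding W_def
          by (rule member_le_sum[where f="\<lambda>d. \<Sum>i<n d. \<Sum>j\<in>{i<..<n d}. (w d i j - w0 d i j)\<^sup>2"]) (auto intro!: sum_nonneg that)
        finally have "(w d i j - w0 d i j)\<^sup>2 \<le> W" .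
        from sq_le_pd[OF W0 A0 G0 this] show ?thesis unfolding pdef by (simp add: add.commute add.left_commute)
      qed
      have Cb: "(\<Sum>d<D. \<Sum>i<n d. \<Sum>j\<in>{i<..<n d}. \<bar>\<gamma> * w d i j - \<gamma>0 * w0 d i j\<bar> * Cg D n d) \<le> p * K"
      proof -
        have "(\<Sum>d<D. \<Sum>i<n d. \<Sum>j\<in>{i<..<n d}. \<bar>\<gamma> * w d i j - \<gamma>0 * w0 d i j\<bar> * Cg D n d)
            \<le> (\<Sum>d<D. \<Sum>i<n d. \<Sum>j\<in>{i<..<n d}. p * (\<bar>w0 d i j\<bar> + 1 + \<bar>\<gamma>0\<bar>) * Cg D n d)"
          by (intro sum_mono mult_right_mono c_bound gp wp p1 Cg_nonneg) auto
        also have "\<dots> = p * K" unfolding K_def by (simp add: sum_distrib_left algebra_simps)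
        finally show ?thesis .
      qed
      have "frob D n (\<lambda>\<iota>. minimizer D n X \<gamma> w \<iota> - minimizer D n X0 \<gamma>0 w0 \<iota>)
          \<le> frob D n (\<lambda>\<iota>. X \<iota> - X0 \<iota>) + (\<Sum>d<D. \<Sum>i<n d. \<Sum>j\<in>{i<..<n d}. \<bar>\<gamma> * w d i j - \<gamma>0 * w0 d i j\<bar> * Cg D n d)"
        by (rule lip[OF adm adm0 MM[OF adm] MM[OF adm0]])
      also have "\<dots> \<le> p + p * K" using fX Cb by linarith
      also have "\<dots> < \<epsilon>" using pK by (simp add: algebra_simps)
      finally show "frob D n (\<lambda>\<iota>. minimizer D n X \<gamma> w \<iota> - minimizer D n X0 \<gamma>0 w0 \<iota>) < \<epsilon>" .
    qed
  qed
  show ?thesis using EU part2 by blast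
qed

end
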